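(* Let $T=((\Omega,\mathcal{A}),\{(\Omega,\mathcal{M}_i)\}_{i\in N},\{t_i\}_{i\in N})$ be a type space. The players' beliefs in $T$ are consistent if and only if there exists a common certainty component $S\subseteq\Omega$ such that the players' beliefs in the induced type space $T_S$ over $S$ are consistent.
   Context: A field on a set $X$ is a collection of subsets of $X$ containing $X$ and closed under complements and finite intersections. For a field $\mathcal{A}$ on $\Omega$, $\mathrm{pba}(\Omega,\mathcal{A})$ is the set of finitely additive nonnegative $P:\mathcal{A}\to\mathbb{R}$ with $P(\Omega)=1$; $B(\Omega,\mathcal{A})$ the sup-norm closure of the linear span of indicators of sets in $\mathcal{A}$; the space of bounded finitely additive set functions carries the weak* topology (weakest making $\mu\mapsto\int f\,d\mu$ continuous for all $f\in B(\Omega,\mathcal{A})$), $\overline{\,\cdot\,}^\ast$ denotes weak* closure. A type space is $((\Omega,\mathcal{A}),\{(\Omega,\mathcal{M}_i)\}_{i\in N},\{t_i\}_{i\in N})$ with $N$ a nonempty set of players, fields $\mathcal{M}_i\subseteq\mathcal{A}$ on a set $\Omega$, and $t_i:\Omega\times\mathcal{A}\to[0,1]$ with: $t_i(\omega,\cdot)\in\mathrm{pba}(\Omega,\mathcal{A})$; $t_i(\cdot,E)\in B(\Omega,\mathcal{M}_i)$ for all $E\in\mathcal{A}$; $t_i(\omega,E)=1$ whenever $E\in\mathcal{M}_i$, $\omega\in E$. For each player $i$, $\Pi_i=\overline{\mathrm{conv}\{t_i(\omega,\cdot):\omega\in\Omega\}}^\ast$ (equivalently the $P\in\mathrm{pba}(\Omega,\mathcal{A})$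 with $P(E\cap F)=\int_F t_i(\cdot,E)\,dP$ for all $E\in\mathcal{A},F\in\mathcal{M}_i$). The players' beliefs in a type space are consistent if $\bigcap_{i\in I}\Pi_i\ne\emptyset$ for every finite set $I$ of players. A nonempty $S\subseteq\Omega$ is a common certainty component if there is $E\in\mathcal{A}$ with $E\subseteq S$ and $t_i(\omega,E)=1$ for all $\omega\in S$ and all $i\in N$. The induced type space is $T_S=((S,\mathcal{A}^S),\{(S,\mathcal{M}_i^S)\}_{i\in N},\{t_i^S\}_{i\in N})$ with $\mathcal{A}^S=\{F\cap S:F\in\mathcal{A}\}$, $\mathcal{M}_i^S=\{F\cap S:F\in\mathcal{M}_i\}$, $t_i^S(\omega,F\cap S)=t_i(\omega,F)$ for $\omega\in S$, $F\in\mathcal{A}$ (this is a type space). *)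

theory Defs
  imports Complex_Main "HOL-Library.Indicator_Function"
begin

definition field_on :: "'w set \<Rightarrow> 'w set set \<Rightarrow> bool" where
  "field_on X F \<longleftrightarrow> F \<subseteq> Pow X \<and> X \<in> F \<and> (\<forall>E\<in>F. X - E \<in> F)
     \<and> (\<forall>E\<in>F. \<forall>G\<in>F. E \<inter> G \<in> F)"

definition pba :: "'w set \<Rightarrow> 'w set set \<Rightarrow> ('w set \<Rightarrow> real) set" where
  "pba X F = {P. (\<forall>E\<in>F. P E \<ge> 0) \<and> P X = 1
     \<and> (\<forall>E\<in>F. \<forall>G\<in>F. E \<inter> G = {} \<longrightarrow> P (E \<union> G) = P E + P G)}"

definition ba :: "'w set \<Rightarrow> 'w set set \<Rightarrow> ('w set \<Rightarrow> real) set" where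
  "ba X F = {\<mu>. (\<forall>E\<in>F. \<forall>G\<in>F. E \<inter> G = {} \<longrightarrow> \<mu> (E \<union> G) = \<mu> E + \<mu> G)
     \<and> (\<exists>K. \<forall>E\<in>F. \<bar>\<mu> E\<bar> \<le> K)}"

definition simple_fn :: "'w set \<Rightarrow> 'w set set \<Rightarrow> ('w \<Rightarrow> real) \<Rightarrow> bool" where
  "simple_fn X F g \<longleftrightarrow> (\<exists>(n::nat) c E. (\<forall>k<n. E k \<in> F) \<and>
     (\<forall>x\<in>X. g x = (\<Sum>k<n. c k * indicator (E k) x)))"

definition simple_int :: "'w set \<Rightarrow> ('w set \<Rightarrow> real) \<Rightarrow> ('w \<Rightarrow> real) \<Rightarrow> real" where
  "simple_int X \<mu> g = (\<Sum>y\<in>g ` X. y * \<mu> {x\<in>X. g x = y})"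

definition Bsp :: "'w set \<Rightarrow> 'w set set \<Rightarrow> ('w \<Rightarrow> real) set" where
  "Bsp X F = {f. \<forall>\<epsilon>>0. \<exists>g. simple_fn X F g \<and> (\<forall>x\<in>X. \<bar>f x - g x\<bar> \<le> \<epsilon>)}"

text \<open>Integral of f in B(X,F) w.r.t. a bounded finitely additive \<mu>: the
  continuous extension of the integral of simple functions.\<close>
definition fa_integral :: "'w set \<Rightarrow> 'w set set \<Rightarrow> ('w set \<Rightarrow> real) \<Rightarrow> ('w \<Rightarrow> real) \<Rightarrow> real" where
  "fa_integral X F \<mu> f = (THE r. \<forall>\<epsilon>>0. \<exists>\<delta>>0. \<forall>g. simple_fn X F g \<and> (\<forall>x\<in>X. \<bar>f x - g x\<bar> \<le> \<delta>)
      \<longrightarrow> \<bar>simple_int X \<mu> g - r\<bar> \<le> \<epsilon>)"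

text \<open>Weak* closure (in ba(X,F)) of a set C: membership unfolds to every basic
  weak* neighbourhood meeting C.\<close>
definition wstar_closure :: "'w set \<Rightarrow> 'w set set \<Rightarrow> ('w set \<Rightarrow> real) set \<Rightarrow> ('w set \<Rightarrow> real) set" where
  "wstar_closure X F C = {P \<in> ba X F. \<forall>Fs. finite Fs \<and> Fs \<subseteq> Bsp X F \<longrightarrow> (\<forall>\<epsilon>>0. \<exists>Q\<in>C.
      \<forall>f\<in>Fs. \<bar>fa_integral X F P f - fa_integral X F Q f\<bar> < \<epsilon>)}"

definition types_conv :: "'w set \<Rightarrow> ('w \<Rightarrow> 'w set \<Rightarrow> real) \<Rightarrow> ('w set \<Rightarrow> real) set" where
  "types_conv X ti = {Q. \<exists>(n::nat) a w. n \<ge> 1 \<and> (\<forall>k<n. a k \<ge> 0 \<and> w k \<in> X) \<and> (\<Sum>k<n. a k) = 1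
      \<and> Q = (\<lambda>E. \<Sum>k<n. a k * ti (w k) E)}"

definition Pi_set :: "'w set \<Rightarrow> 'w set set \<Rightarrow> ('w \<Rightarrow> 'w set \<Rightarrow> real) \<Rightarrow> ('w set \<Rightarrow> real) set" where
  "Pi_set X F ti = wstar_closure X F (types_conv X ti)"

definition type_space ::
  "'w set \<Rightarrow> 'w set set \<Rightarrow> 'i set \<Rightarrow> ('i \<Rightarrow> 'w set set) \<Rightarrow> ('i \<Rightarrow> 'w \<Rightarrow> 'w set \<Rightarrow> real) \<Rightarrow> bool" where
  "type_space X A N M t \<longleftrightarrow> N \<noteq> {} \<and> field_on X A \<and>
     (\<forall>i\<in>N. field_on X (M i) \<and> M i \<subseteq> A \<and>
        (\<forall>x\<in>X. \<forall>E\<in>A. 0 \<le> t i x E \<and> t i x E \<le> 1) \<and>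
        (\<forall>x\<in>X. t i x \<in> pba X A) \<and>
        (\<forall>E\<in>A. (\<lambda>x. t i x E) \<in> Bsp X (M i)) \<and>
        (\<forall>E\<in>M i. \<forall>x\<in>E. t i x E = 1))"

definition consistent ::
  "'w set \<Rightarrow> 'w set set \<Rightarrow> 'i set \<Rightarrow> ('i \<Rightarrow> 'w set set) \<Rightarrow> ('i \<Rightarrow> 'w \<Rightarrow> 'w set \<Rightarrow> real) \<Rightarrow> bool" where
  "consistent X A N M t \<longleftrightarrow> (\<forall>I. finite I \<and> I \<subseteq> N \<longrightarrow> (\<Inter>i\<in>I. Pi_set X A (t i)) \<noteq> {})"

definition cc_component ::
  "'w set \<Rightarrow> 'w set set \<Rightarrow> 'i set \<Rightarrow> ('i \<Rightarrow> 'w \<Rightarrow> 'w set \<Rightarrow> real) \<Rightarrow> 'w set \<Rightarrow> bool" where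
  "cc_component X A N t S \<longleftrightarrow> S \<noteq> {} \<and> S \<subseteq> X \<and>
     (\<exists>E\<in>A. E \<subseteq> S \<and> (\<forall>x\<in>S. \<forall>i\<in>N. t i x E = 1))"

text \<open>Trace field F^S and induced types t_i^S(x, F \<inter> S) = t_i(x, F).\<close>
definition trace :: "'w set set \<Rightarrow> 'w set \<Rightarrow> 'w set set" where
  "trace F S = {G \<inter> S | G. G \<in> F}"

definition induced_t :: "'w set set \<Rightarrow> 'w set \<Rightarrow> ('i \<Rightarrow> 'w \<Rightarrow> 'w set \<Rightarrow> real) \<Rightarrow> ('i \<Rightarrow> 'w \<Rightarrow> 'w set \<Rightarrow> real)" where
  "induced_t A S t = (\<lambda>i x H. t i x (SOME G. G \<in> A \<and> H = G \<inter> S))"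

end

theory Submission
  imports Defs
begin

lemma field_basic:
  assumes "field_on X F"
  shows "{} \<in> F" and "\<And>B. B \<in> F \<Longrightarrow> B \<subseteq> X"
    and "\<And>B C. B \<in> F \<Longrightarrow> C \<in> F \<Longrightarrow> B \<union> C \<in> F"
    and "\<And>B C. B \<in> F \<Longrightarrow> C \<in> F \<Longrightarrow> B - C \<in> F"
    and "\<And>B C. B \<in> F \<Longrightarrow> C \<in> F \<Longrightarrow> B \<inter> C \<in> F"
    and "X \<in> F" and "\<And>B. B \<in> F \<Longrightarrow> X - B \<in> F"
proof -
  have X: "X \<in> F" and c: "\<And>B. B \<in> F \<Longrightarrow> X - B \<in> F"
    and i: "\<And>B C. B \<in> F \<Longrightarrow> C \<in> F \<Longrightarrow> B \<inter> C \<in> F"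
    and p: "\<And>B. B \<in> F \<Longrightarrow> B \<subseteq> X"
    using assms unfolding field_on_def by blast+
  show "X \<in> F" by (fact X)
  show "\<And>B. B \<in> F \<Longrightarrow> X - B \<in> F" by (fact c)
  show "{} \<in> F" using c[OF X] by simp
  show "\<And>B. B \<in> F \<Longrightarrow> B \<subseteq> X" by (fact p)
  show "\<And>B C. B \<in> F \<Longrightarrow> C \<in> F \<Longrightarrow> B \<inter> C \<in> F" by (fact i)
  show dif: "\<And>B C. B \<in> F \<Longrightarrow> C \<in> F \<Longrightarrow> B - C \<in> F"
  proof -
    fix B C assume "B \<in> F" "C \<in> F"
    then have "B \<inter> (X - C) \<in> F" using i c by blast
    moreover have "B \<inter> (X - C) = B - C" using p[OF \<open>B \<in> F\<close>] by blast
    ultimately show "B - C \<in> F" by simp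
  qed
  show "\<And>B C. B \<in> F \<Longrightarrow> C \<in> F \<Longrightarrow> B \<union> C \<in> F"
  proof -
    fix B C assume "B \<in> F" "C \<in> F"
    then have "X - ((X - B) \<inter> (X - C)) \<in> F" using i c by blast
    moreover have "X - ((X - B) \<inter> (X - C)) = B \<union> C" using p \<open>B \<in> F\<close> \<open>C \<in> F\<close> by blast
    ultimately show "B \<union> C \<in> F" by simp
  qed
qed

lemma field_on_trace:
  assumes "field_on X A" "S \<subseteq> X"
  shows "field_on S (trace A S)"
  unfolding field_on_def
proof (intro conjI ballI)
  show "trace A S \<subseteq> Pow S" unfolding trace_def by blast
  show "S \<in> trace A S" unfolding trace_def using field_basic(6)[OF assms(1)] assms(2) by blast
  fix B assume "B \<in> trace A S"
  then obtain G where G: "G \<in> A" "B = G \<inter> S" unfolding trace_def by blast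
  have "S - B = (X - G) \<inter> S" using G assms(2) by blast
  then show "S - B \<in> trace A S" unfolding trace_def using field_basic(7)[OF assms(1) G(1)] by blast
  fix C assume "C \<in> trace A S"
  then obtain G' where G': "G' \<in> A" "C = G' \<inter> S" unfolding trace_def by blast
  have "B \<inter> C = (G \<inter> G') \<inter> S" using G G' by blast
  then show "B \<inter> C \<in> trace A S" unfolding trace_def using field_basic(5)[OF assms(1) G(1) G'(1)] by blast
qed

lemma trace_self:
  assumes "field_on X A" shows "trace A X = A"
proof (intro equalityI subsetI)
  fix H assume "H \<in> trace A X"
  then obtain G where G: "G \<in> A" "H = G \<inter> X" unfolding trace_def by blast
  then show "H \<in> A" using field_basic(2)[OF assms G(1)] by (simp add: Int_absorb2)
next
  fix H assume H: "H \<in> A"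
  then have "H = H \<inter> X" using field_basic(2)[OF assms] by blast
  then show "H \<in> trace A X" unfolding trace_def using H by blast
qed

lemma simple_fn_finite:
  assumes "simple_fn X F g" shows "finite (g ` X)"
proof -
  obtain n and c :: "nat \<Rightarrow> real" and E where g: "\<forall>x\<in>X. g x = (\<Sum>k<n. c k * indicator (E k) x)"
    using assms unfolding simple_fn_def by blast
  have "g ` X \<subseteq> (\<lambda>B. \<Sum>k\<in>B. c k) ` Pow {..<n}"
  proof
    fix y assume "y \<in> g ` X"
    then obtain x where x: "x \<in> X" "y = g x" by blast
    have "y = (\<Sum>k\<in>{..<n} \<inter> {k. x \<in> E k}. c k)"
      using g x by (simp add: sum.inter_filter indicator_def if_distrib cong: if_cong)
    then show "y \<in> (\<lambda>B. \<Sum>k\<in>B. c k) ` Pow {..<n}" by blast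
  qed
  then show ?thesis by (rule finite_subset) simp
qed

lemma level_sum_in_field:
  fixes c :: "nat \<Rightarrow> real"
  assumes "field_on X F"
  shows "(\<forall>k<(n::nat). E k \<in> F) \<Longrightarrow> {x\<in>X. (\<Sum>k<n. c k * indicator (E k) x) = y} \<in> F"
proof (induction n arbitrary: y)
  case 0
  show ?case
  proof (cases "y = 0")
    case True
    then have "{x\<in>X. (\<Sum>k<(0::nat). c k * indicator (E k) x) = y} = X" by simp
    then show ?thesis using field_basic(6)[OF assms] by simp
  next
    case False
    then have "{x\<in>X. (\<Sum>k<(0::nat). c k * indicator (E k) x) = y} = {}" by simp
    then show ?thesis using field_basic(1)[OF assms] by (simp only:)
  qed
next
  case (Suc n)
  have IH: "\<And>y. {x\<in>X. (\<Sum>k<n. c k * indicator (E k) x) = y} \<in> F" using Suc by simp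
  have En: "E n \<in> F" using Suc by simp
  have "{x\<in>X. (\<Sum>k<Suc n. c k * indicator (E k) x) = y} =
     ({x\<in>X. (\<Sum>k<n. c k * indicator (E k) x) = y - c n} \<inter> E n) \<union>
     ({x\<in>X. (\<Sum>k<n. c k * indicator (E k) x) = y} - E n)"
  proof (intro equalityI subsetI)
    fix x assume "x \<in> {x\<in>X. (\<Sum>k<Suc n. c k * indicator (E k) x) = y}"
    then show "x \<in> ({x\<in>X. (\<Sum>k<n. c k * indicator (E k) x) = y - c n} \<inter> E n) \<union>
     ({x\<in>X. (\<Sum>k<n. c k * indicator (E k) x) = y} - E n)"
      by (cases "x \<in> E n") auto
  next
    fix x assume "x \<in> ({x\<in>X. (\<Sum>k<n. c k * indicator (E k) x) = y - c n} \<inter> E n) \<union>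
     ({x\<in>X. (\<Sum>k<n. c k * indicator (E k) x) = y} - E n)"
    then show "x \<in> {x\<in>X. (\<Sum>k<Suc n. c k * indicator (E k) x) = y}"
      by (cases "x \<in> E n") auto
  qed
  then show ?case using IH En field_basic(2,3,4,5)[OF assms] by simp
qed

lemma level_in_field:
  assumes "field_on X F" "simple_fn X F g"
  shows "{x\<in>X. g x = y} \<in> F"
proof -
  obtain n and c :: "nat \<Rightarrow> real" and E where E: "\<forall>k<n. E k \<in> F" and g: "\<forall>x\<in>X. g x = (\<Sum>k<n. c k * indicator (E k) x)"
    using assms(2) unfolding simple_fn_def by blast
  have "{x\<in>X. g x = y} = {x\<in>X. (\<Sum>k<n. c k * indicator (E k) x) = y}" using g by auto
  then show ?thesis using level_sum_in_field[OF assms(1) E] by simp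
qed

lemma sum_lessThan_add_split:
  "(\<Sum>k<n1 + n2. h k) = (\<Sum>k<n1. h k) + (\<Sum>k<n2. h (n1 + k))" for h :: "nat \<Rightarrow> real"
  by (induction n2) (simp_all add: algebra_simps)

lemma simple_fn_add:
  assumes "simple_fn X F g1" "simple_fn X F g2"
  shows "simple_fn X F (\<lambda>x. g1 x + g2 x)"
proof -
  obtain n1 and c1 :: "nat \<Rightarrow> real" and E1 where E1: "\<forall>k<n1. E1 k \<in> F"
    and g1: "\<forall>x\<in>X. g1 x = (\<Sum>k<n1. c1 k * indicator (E1 k) x)"
    using assms(1) unfolding simple_fn_def by blast
  obtain n2 and c2 :: "nat \<Rightarrow> real" and E2 where E2: "\<forall>k<n2. E2 k \<in> F"
    and g2: "\<forall>x\<in>X. g2 x = (\<Sum>k<n2. c2 k * indicator (E2 k) x)"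
    using assms(2) unfolding simple_fn_def by blast
  define c where "c k = (if k < n1 then c1 k else c2 (k - n1))" for k
  define E where "E k = (if k < n1 then E1 k else E2 (k - n1))" for k
  have "\<forall>k<n1+n2. E k \<in> F" using E1 E2 unfolding E_def by auto
  moreover have "\<forall>x\<in>X. g1 x + g2 x = (\<Sum>k<n1+n2. c k * indicator (E k) x)"
    unfolding sum_lessThan_add_split using g1 g2 by (simp add: c_def E_def)
  ultimately show ?thesis unfolding simple_fn_def by blast
qed

lemma simple_fn_mult_ind:
  assumes "field_on X F" "simple_fn X F g" "B \<in> F"
  shows "simple_fn X F (\<lambda>x. indicator B x * g x)"
proof -
  obtain n and c :: "nat \<Rightarrow> real" and E where E: "\<forall>k<n. E k \<in> F"
    and g: "\<forall>x\<in>X. g x = (\<Sum>k<n. c k * indicator (E k) x)"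
    using assms(2) unfolding simple_fn_def by blast
  have "\<forall>k<n. E k \<inter> B \<in> F" using E assms(3) field_basic(5)[OF assms(1)] by blast
  moreover have "\<forall>x\<in>X. indicator B x * g x = (\<Sum>k<n. c k * indicator (E k \<inter> B) x)"
    using g by (simp add: sum_distrib_left indicator_def)
  ultimately show ?thesis unfolding simple_fn_def
    by (intro exI[where x=n] exI[where x=c] exI[where x="\<lambda>k. E k \<inter> B"]) simp
qed

lemma simple_fn_ext:
  assumes "simple_fn S (trace A S) g"
  shows "\<exists>g'. simple_fn X A g' \<and> (\<forall>x\<in>S. g' x = g x)"
proof -
  obtain n and c :: "nat \<Rightarrow> real" and E where E: "\<forall>k<n. E k \<in> trace A S"
    and g: "\<forall>x\<in>S. g x = (\<Sum>k<n. c k * indicator (E k) x)"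
    using assms unfolding simple_fn_def by blast
  have "\<forall>k. \<exists>G. k < n \<longrightarrow> G \<in> A \<and> E k = G \<inter> S" using E unfolding trace_def by blast
  then obtain G where G: "\<And>k. k < n \<Longrightarrow> G k \<in> A \<and> E k = G k \<inter> S" by metis
  define g' where "g' x = (\<Sum>k<n. c k * indicator (G k) x)" for x
  have "simple_fn X A g'" unfolding simple_fn_def g'_def using G by blast
  moreover have "\<forall>x\<in>S. g' x = g x" using g G unfolding g'_def by (auto simp: indicator_def)
  ultimately show ?thesis by blast
qed

lemma simple_fn_restr:
  assumes "simple_fn X A g" "S \<subseteq> X"
  shows "simple_fn S (trace A S) g"
proof -
  obtain n and c :: "nat \<Rightarrow> real" and E where E: "\<forall>k<n. E k \<in> A"
    and g: "\<forall>x\<in>X. g x = (\<Sum>k<n. c k * indicator (E k) x)"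
    using assms unfolding simple_fn_def by blast
  have "\<forall>k<n. E k \<inter> S \<in> trace A S" using E unfolding trace_def by blast
  moreover have "\<forall>x\<in>S. g x = (\<Sum>k<n. c k * indicator (E k \<inter> S) x)"
    using g assms(2) by (auto simp: indicator_def)
  ultimately show ?thesis unfolding simple_fn_def
    by (intro exI[where x=n] exI[where x=c] exI[where x="\<lambda>k. E k \<inter> S"]) simp
qed

lemma Bsp_restr:
  assumes "f \<in> Bsp X A" "S \<subseteq> X"
  shows "f \<in> Bsp S (trace A S)"
  unfolding Bsp_def
proof (intro CollectI allI impI)
  fix e :: real assume "e > 0"
  then obtain g where g: "simple_fn X A g" "\<forall>x\<in>X. \<bar>f x - g x\<bar> \<le> e"
    using assms(1) unfolding Bsp_def by blast
  then have "simple_fn S (trace A S) g" using simple_fn_restr assms(2) by blast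
  moreover have "\<forall>x\<in>S. \<bar>f x - g x\<bar> \<le> e" using g assms(2) by blast
  ultimately show "\<exists>g. simple_fn S (trace A S) g \<and> (\<forall>x\<in>S. \<bar>f x - g x\<bar> \<le> e)" by blast
qed

lemma simple_int_restrict:
  assumes "Y \<subseteq> X" "finite (g ` X)"
    "\<forall>y\<in>g ` X. \<mu> {x\<in>X. g x = y} = \<mu> {x\<in>Y. g x = y}" "\<mu> {} = 0"
  shows "simple_int X \<mu> g = simple_int Y \<mu> g"
proof -
  have "simple_int X \<mu> g = (\<Sum>y\<in>g ` X. y * \<mu> {x\<in>Y. g x = y})"
    unfolding simple_int_def using assms(3) by (intro sum.cong) auto
  also have "\<dots> = (\<Sum>y\<in>g ` Y. y * \<mu> {x\<in>Y. g x = y})"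
  proof (rule sum.mono_neutral_right[OF assms(2)])
    show "g ` Y \<subseteq> g ` X" using assms(1) by blast
    show "\<forall>y\<in>g ` X - g ` Y. y * \<mu> {x\<in>Y. g x = y} = 0"
    proof
      fix y assume "y \<in> g ` X - g ` Y"
      then have "{x\<in>Y. g x = y} = {}" by blast
      then show "y * \<mu> {x\<in>Y. g x = y} = 0" using assms(4) by (simp only: mult_zero_right)
    qed
  qed
  finally show ?thesis unfolding simple_int_def .
qed

lemma fa_integral_eqI:
  assumes "\<And>r. (\<forall>\<epsilon>>0. \<exists>\<delta>>0. \<forall>g. simple_fn X A g \<and> (\<forall>x\<in>X. \<bar>f x - g x\<bar> \<le> \<delta>)
      \<longrightarrow> \<bar>simple_int X \<mu> g - r\<bar> \<le> \<epsilon>) \<longleftrightarrow>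
    (\<forall>\<epsilon>>0. \<exists>\<delta>>0. \<forall>g. simple_fn S B g \<and> (\<forall>x\<in>S. \<bar>f x - g x\<bar> \<le> \<delta>)
      \<longrightarrow> \<bar>simple_int S \<nu> g - r\<bar> \<le> \<epsilon>)"
  shows "fa_integral X A \<mu> f = fa_integral S B \<nu> f"
  unfolding fa_integral_def by (rule arg_cong[where f=The], rule ext, rule assms)

lemma fa_integral_cong:
  assumes "field_on X A" "\<forall>G\<in>A. \<mu> G = \<nu> G"
  shows "fa_integral X A \<mu> f = fa_integral X A \<nu> f"
proof (rule fa_integral_eqI)
  have si: "simple_int X \<mu> g = simple_int X \<nu> g" if "simple_fn X A g" for g
    unfolding simple_int_def using level_in_field[OF assms(1) that] assms(2) by simp
  fix r
  show "(\<forall>\<epsilon>>0. \<exists>\<delta>>0. \<forall>g. simple_fn X A g \<and> (\<forall>x\<in>X. \<bar>f x - g x\<bar> \<le> \<delta>)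
      \<longrightarrow> \<bar>simple_int X \<mu> g - r\<bar> \<le> \<epsilon>) \<longleftrightarrow>
    (\<forall>\<epsilon>>0. \<exists>\<delta>>0. \<forall>g. simple_fn X A g \<and> (\<forall>x\<in>X. \<bar>f x - g x\<bar> \<le> \<delta>)
      \<longrightarrow> \<bar>simple_int X \<nu> g - r\<bar> \<le> \<epsilon>)"
  proof -
    have eq: "(simple_fn X A g \<and> D \<longrightarrow> \<bar>simple_int X \<mu> g - r\<bar> \<le> e) \<longleftrightarrow>
       (simple_fn X A g \<and> D \<longrightarrow> \<bar>simple_int X \<nu> g - r\<bar> \<le> e)" for g D e
      using si by auto
    show ?thesis by (simp only: eq)
  qed
qed

lemma fa_integral_unique:
  assumes "f \<in> Bsp X F"
    and "\<forall>\<epsilon>>0. \<exists>\<delta>>0. \<forall>g. simple_fn X F g \<and> (\<forall>x\<in>X. \<bar>f x - g x\<bar> \<le> \<delta>)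
      \<longrightarrow> \<bar>simple_int X \<mu> g - r\<bar> \<le> \<epsilon>" (is "?P r")
  shows "fa_integral X F \<mu> f = r"
  unfolding fa_integral_def
proof (rule the_equality)
  show "?P r" by (fact assms(2))
  fix r' assume P': "?P r'"
  show "r' = r"
  proof (rule ccontr)
    assume "r' \<noteq> r"
    define e where "e = \<bar>r - r'\<bar> / 3"
    have e: "e > 0" using \<open>r' \<noteq> r\<close> unfolding e_def by simp
    obtain d1 where d1: "d1 > 0" "\<forall>g. simple_fn X F g \<and> (\<forall>x\<in>X. \<bar>f x - g x\<bar> \<le> d1)
      \<longrightarrow> \<bar>simple_int X \<mu> g - r\<bar> \<le> e" using assms(2) e by blast
    obtain d2 where d2: "d2 > 0" "\<forall>g. simple_fn X F g \<and> (\<forall>x\<in>X. \<bar>f x - g x\<bar> \<le> d2)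
      \<longrightarrow> \<bar>simple_int X \<mu> g - r'\<bar> \<le> e" using P' e by blast
    have "min d1 d2 > 0" using d1 d2 by simp
    then obtain g where g: "simple_fn X F g" "\<forall>x\<in>X. \<bar>f x - g x\<bar> \<le> min d1 d2"
      using assms(1) unfolding Bsp_def by blast
    have "\<bar>simple_int X \<mu> g - r\<bar> \<le> e" using d1(2) g by auto
    moreover have "\<bar>simple_int X \<mu> g - r'\<bar> \<le> e" using d2(2) g by auto
    ultimately have "\<bar>r - r'\<bar> \<le> 2 * e" by linarith
    moreover have "3 * e = \<bar>r - r'\<bar>" unfolding e_def by simp
    ultimately show False using e by linarith
  qed
qed

lemma additive_empty:
  fixes \<mu> :: "'a set \<Rightarrow> real"
  assumes "field_on X F" "\<forall>E\<in>F. \<forall>G\<in>F. E \<inter> G = {} \<longrightarrow> \<mu> (E \<union> G) = \<mu> E + \<mu> G"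
  shows "\<mu> {} = 0"
proof -
  have "\<mu> ({} \<union> {}) = \<mu> {} + \<mu> {}" using assms(2) field_basic(1)[OF assms(1)] by blast
  then show ?thesis by simp
qed

lemma fa_union:
  fixes \<mu> :: "'a set \<Rightarrow> real"
  assumes "field_on X F" "\<forall>E\<in>F. \<forall>G\<in>F. E \<inter> G = {} \<longrightarrow> \<mu> (E \<union> G) = \<mu> E + \<mu> G"
    and "finite V"
  shows "(\<forall>y\<in>V. L y \<in> F) \<Longrightarrow> (\<forall>y\<in>V. \<forall>z\<in>V. y \<noteq> z \<longrightarrow> L y \<inter> L z = {}) \<Longrightarrow>
     (\<Union>y\<in>V. L y) \<in> F \<and> \<mu> (\<Union>y\<in>V. L y) = (\<Sum>y\<in>V. \<mu> (L y))"
  using assms(3)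
proof (induction V rule: finite_induct)
  case empty
  then show ?case using field_basic(1)[OF assms(1)] additive_empty[OF assms(1,2)] by simp
next
  case (insert a V)
  then have IH: "(\<Union>y\<in>V. L y) \<in> F" "\<mu> (\<Union>y\<in>V. L y) = (\<Sum>y\<in>V. \<mu> (L y))" by auto
  have La: "L a \<in> F" using insert by simp
  have "L a \<inter> L z = {}" if z: "z \<in> V" for z
  proof -
    have "a \<noteq> z" using insert(2) z by auto
    then show ?thesis using insert(5) z by blast
  qed
  then have disj: "L a \<inter> (\<Union>y\<in>V. L y) = {}" by blast
  have "(\<Union>y\<in>insert a V. L y) = L a \<union> (\<Union>y\<in>V. L y)" by simp
  moreover have "L a \<union> (\<Union>y\<in>V. L y) \<in> F" using field_basic(3)[OF assms(1) La IH(1)] .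
  moreover have "\<mu> (L a \<union> (\<Union>y\<in>V. L y)) = \<mu> (L a) + \<mu> (\<Union>y\<in>V. L y)"
    using assms(2) La IH(1) disj by blast
  ultimately show ?case using IH(2) insert(1,2) by simp
qed

lemma variation_bound:
  fixes \<mu> :: "'a set \<Rightarrow> real"
  assumes "field_on X F" "\<forall>E\<in>F. \<forall>G\<in>F. E \<inter> G = {} \<longrightarrow> \<mu> (E \<union> G) = \<mu> E + \<mu> G"
    and "\<forall>E\<in>F. \<bar>\<mu> E\<bar> \<le> K"
    and "finite V" "\<forall>y\<in>V. L y \<in> F" "\<forall>y\<in>V. \<forall>z\<in>V. y \<noteq> z \<longrightarrow> L y \<inter> L z = {}"
  shows "(\<Sum>y\<in>V. \<bar>\<mu> (L y)\<bar>) \<le> 2 * K"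
proof -
  let ?B = "{y. \<mu> (L y) \<ge> 0}"
  have s: "(\<Sum>y\<in>V. \<bar>\<mu> (L y)\<bar>) = (\<Sum>y\<in>V \<inter> ?B. \<bar>\<mu> (L y)\<bar>) + (\<Sum>y\<in>V - ?B. \<bar>\<mu> (L y)\<bar>)"
    using sum.Int_Diff[OF assms(4)] by blast
  have p: "(\<Sum>y\<in>V \<inter> ?B. \<bar>\<mu> (L y)\<bar>) = \<mu> (\<Union>y\<in>V \<inter> ?B. L y)"
  proof -
    have "(\<Sum>y\<in>V \<inter> ?B. \<bar>\<mu> (L y)\<bar>) = (\<Sum>y\<in>V \<inter> ?B. \<mu> (L y))" by (intro sum.cong) (auto simp: abs_of_nonneg)
    also have "\<dots> = \<mu> (\<Union>y\<in>V \<inter> ?B. L y)"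
      using fa_union[OF assms(1,2), of "V \<inter> ?B" L] assms(4-6) by auto
    finally show ?thesis .
  qed
  have n: "(\<Sum>y\<in>V - ?B. \<bar>\<mu> (L y)\<bar>) = - \<mu> (\<Union>y\<in>V - ?B. L y)"
  proof -
    have "(\<Sum>y\<in>V - ?B. \<bar>\<mu> (L y)\<bar>) = - (\<Sum>y\<in>V - ?B. \<mu> (L y))"
      by (simp add: sum_negf[symmetric])
    also have "\<dots> = - \<mu> (\<Union>y\<in>V - ?B. L y)"
      using fa_union[OF assms(1,2), of "V - ?B" L] assms(4-6) by auto
    finally show ?thesis .
  qed
  have "(\<Union>y\<in>V \<inter> ?B. L y) \<in> F" "(\<Union>y\<in>V - ?B. L y) \<in> F"
    using fa_union[OF assms(1,2), of "V \<inter> ?B" L] fa_union[OF assms(1,2), of "V - ?B" L] assms(4-6)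
    by auto
  then have "\<mu> (\<Union>y\<in>V \<inter> ?B. L y) \<le> K" "- \<mu> (\<Union>y\<in>V - ?B. L y) \<le> K"
    using assms(3) by fastforce+
  then show ?thesis using s p n by linarith
qed

lemma indicator_simple:
  assumes "H \<in> F" shows "simple_fn X F (indicator H)"
  unfolding simple_fn_def using assms
  by (intro exI[where x="1::nat"] exI[where x="\<lambda>_. 1::real"] exI[where x="\<lambda>_. H"]) simp

lemma indicator_Bsp:
  assumes "H \<in> F" shows "indicator H \<in> Bsp X F"
  unfolding Bsp_def using indicator_simple[OF assms] by force

lemma integral_indicator:
  fixes \<mu> :: "'a set \<Rightarrow> real"
  assumes field: "field_on X F" and ba: "\<mu> \<in> ba X F" and H: "H \<in> F"
  shows "fa_integral X F \<mu> (indicator H) = \<mu> H"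
proof (rule fa_integral_unique)
  show "indicator H \<in> Bsp X F" using indicator_Bsp[OF H] .
  have add: "\<forall>E\<in>F. \<forall>G\<in>F. E \<inter> G = {} \<longrightarrow> \<mu> (E \<union> G) = \<mu> E + \<mu> G"
    using ba unfolding ba_def by blast
  obtain K where K: "\<forall>E\<in>F. \<bar>\<mu> E\<bar> \<le> K" using ba unfolding ba_def by blast
  have K0: "K \<ge> 0" using K field_basic(6)[OF field] by force
  have HX: "H \<subseteq> X" using field_basic(2)[OF field H] .
  show "\<forall>\<epsilon>>0. \<exists>\<delta>>0. \<forall>g. simple_fn X F g \<and> (\<forall>x\<in>X. \<bar>indicator H x - g x\<bar> \<le> \<delta>)
      \<longrightarrow> \<bar>simple_int X \<mu> g - \<mu> H\<bar> \<le> \<epsilon>"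
  proof (intro allI impI)
    fix \<epsilon> :: real assume e: "\<epsilon> > 0"
    define \<delta> where "\<delta> = min (1/4) (\<epsilon> / (2 * K + 1))"
    have d0: "\<delta> > 0" using e K0 unfolding \<delta>_def by simp
    have d4: "\<delta> \<le> 1/4" unfolding \<delta>_def by (rule min.cobounded1)
    have dK: "\<delta> * (2 * K) \<le> \<epsilon>"
    proof -
      have "\<delta> * (2 * K) \<le> (\<epsilon> / (2 * K + 1)) * (2 * K)"
        using K0 unfolding \<delta>_def by (intro mult_right_mono) auto
      also have "\<dots> \<le> (\<epsilon> / (2 * K + 1)) * (2 * K + 1)"
        using K0 e by (intro mult_left_mono) auto
      also have "\<dots> = \<epsilon>" using K0 by simp
      finally show ?thesis .
    qed
    show "\<exists>\<delta>>0. \<forall>g. simple_fn X F g \<and> (\<forall>x\<in>X. \<bar>indicator H x - g x\<bar> \<le> \<delta>)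
      \<longrightarrow> \<bar>simple_int X \<mu> g - \<mu> H\<bar> \<le> \<epsilon>"
    proof (intro exI[where x=\<delta>] conjI allI impI)
      show "\<delta> > 0" by (fact d0)
      fix g assume g: "simple_fn X F g \<and> (\<forall>x\<in>X. \<bar>indicator H x - g x\<bar> \<le> \<delta>)"
      define V where "V = g ` X"
      define L where "L y = {x\<in>X. g x = y}" for y
      have finV: "finite V" unfolding V_def using simple_fn_finite g by blast
      have LF: "\<forall>y\<in>V. L y \<in> F" unfolding L_def using level_in_field[OF field] g by blast
      have disj: "\<forall>y\<in>V. \<forall>z\<in>V. y \<noteq> z \<longrightarrow> L y \<inter> L z = {}" unfolding L_def by blast
      have inH: "g x > 1/2" if "x \<in> X" "x \<in> H" for x
        using g that d4 by (force simp: indicator_def)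
      have notH: "g x < 1/2" if "x \<in> X" "x \<notin> H" for x
        using g that d4 by (force simp: indicator_def)
      have Hset: "H = (\<Union>y\<in>{y\<in>V. 1/2 < y}. L y)"
        unfolding L_def V_def using inH notH HX by fastforce
      have muH: "\<mu> H = (\<Sum>y\<in>V. (if 1/2 < y then 1 else 0) * \<mu> (L y))"
      proof -
        have "\<mu> H = (\<Sum>y\<in>{y\<in>V. 1/2 < y}. \<mu> (L y))"
          using fa_union[OF field add, of "{y\<in>V. 1/2 < y}" L] finV LF disj Hset by auto
        also have "\<dots> = (\<Sum>y\<in>V. (if 1/2 < y then 1 else 0) * \<mu> (L y))"
          using finV by (simp add: sum.inter_filter) (intro sum.cong, auto)
        finally show ?thesis .
      qed
      have si: "simple_int X \<mu> g = (\<Sum>y\<in>V. y * \<mu> (L y))"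
        unfolding simple_int_def V_def L_def ..
      have coef: "\<bar>y - (if 1/2 < y then 1 else 0)\<bar> \<le> \<delta>" if yV: "y \<in> V" for y
      proof -
        obtain x where x: "x \<in> X" "y = g x" using yV unfolding V_def by blast
        show ?thesis
        proof (cases "x \<in> H")
          case True
          then show ?thesis using inH[OF x(1) True] g x by (auto simp: indicator_def)
        next
          case False
          then show ?thesis using notH[OF x(1) False] g x by (auto simp: indicator_def)
        qed
      qed
      have "simple_int X \<mu> g - \<mu> H = (\<Sum>y\<in>V. (y - (if 1/2 < y then 1 else 0)) * \<mu> (L y))"
        unfolding si muH by (simp add: sum_subtractf[symmetric] left_diff_distrib)
      then have "\<bar>simple_int X \<mu> g - \<mu> H\<bar> \<le> (\<Sum>y\<in>V. \<bar>(y - (if 1/2 < y then 1 else 0)) * \<mu> (L y)\<bar>)"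
        by (simp only: sum_abs)
      also have "\<dots> \<le> (\<Sum>y\<in>V. \<delta> * \<bar>\<mu> (L y)\<bar>)"
        using coef by (intro sum_mono) (simp add: abs_mult mult_right_mono)
      also have "\<dots> = \<delta> * (\<Sum>y\<in>V. \<bar>\<mu> (L y)\<bar>)" by (simp add: sum_distrib_left)
      also have "\<dots> \<le> \<delta> * (2 * K)"
        using variation_bound[OF field add K finV LF disj] d0 by (intro mult_left_mono) auto
      also have "\<dots> \<le> \<epsilon>" by (fact dK)
      finally show "\<bar>simple_int X \<mu> g - \<mu> H\<bar> \<le> \<epsilon>" .
    qed
  qed
qed

lemma transfer:
  fixes \<mu> \<nu> :: "'a set \<Rightarrow> real"
  assumes field: "field_on X A" and SX: "S \<subseteq> X" and EA: "E \<in> A" and ES: "E \<subseteq> S"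
    and rel: "\<forall>G\<in>A. \<nu> (G \<inter> S) = \<mu> G"
    and conc: "\<forall>H\<in>trace A S. \<nu> H = \<nu> (H \<inter> E)"
    and nu0: "\<nu> {} = 0"
    and f: "f \<in> Bsp X A"
  shows "fa_integral X A \<mu> f = fa_integral S (trace A S) \<nu> f"
proof (rule fa_integral_eqI)
  have EX: "E \<subseteq> X" using ES SX by blast
  have mu0: "\<mu> {} = 0" using rel field_basic(1)[OF field] nu0 by force
  have muconc: "\<mu> G = \<mu> (G \<inter> E)" if G: "G \<in> A" for G
  proof -
    have "G \<inter> S \<in> trace A S" unfolding trace_def using G by blast
    then have "\<mu> G = \<nu> (G \<inter> S \<inter> E)" using rel conc G by metis
    also have "G \<inter> S \<inter> E = (G \<inter> E) \<inter> S" using ES by blast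
    also have "\<nu> \<dots> = \<mu> (G \<inter> E)" using rel field_basic(5)[OF field G EA] by blast
    finally show ?thesis .
  qed
  have trS: "field_on S (trace A S)" using field_on_trace[OF field SX] .
  have Xside: "simple_int X \<mu> g = simple_int E \<mu> g" if g: "simple_fn X A g" for g
  proof -
    have lv: "\<forall>y\<in>g ` X. \<mu> {x \<in> X. g x = y} = \<mu> {x \<in> E. g x = y}"
    proof
      fix y
      have "{x \<in> X. g x = y} \<inter> E = {x \<in> E. g x = y}" using EX by blast
      then show "\<mu> {x \<in> X. g x = y} = \<mu> {x \<in> E. g x = y}"
        using muconc[OF level_in_field[OF field g]] by simp
    qed
    show ?thesis by (rule simple_int_restrict[OF EX simple_fn_finite[OF g] lv mu0])
  qed
  have Sside: "simple_int S \<nu> g = simple_int E \<nu> g" if g: "simple_fn S (trace A S) g" for g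
  proof -
    have lv: "\<forall>y\<in>g ` S. \<nu> {x \<in> S. g x = y} = \<nu> {x \<in> E. g x = y}"
    proof
      fix y
      have "{x \<in> S. g x = y} \<inter> E = {x \<in> E. g x = y}" using ES by blast
      then show "\<nu> {x \<in> S. g x = y} = \<nu> {x \<in> E. g x = y}"
        using conc level_in_field[OF trS g] by metis
    qed
    show ?thesis by (rule simple_int_restrict[OF ES simple_fn_finite[OF g] lv nu0])
  qed
  have Emid: "simple_int E \<mu> g = simple_int E \<nu> g" if L: "\<And>y. {x\<in>E. g x = y} \<in> A" for g
    unfolding simple_int_def
  proof (rule sum.cong[OF refl])
    fix y
    have "{x\<in>E. g x = y} \<inter> S = {x\<in>E. g x = y}" using ES by blast
    then show "y * \<mu> {x \<in> E. g x = y} = y * \<nu> {x \<in> E. g x = y}" using rel L by metis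
  qed
  have Econg: "simple_int E \<nu> g = simple_int E \<nu> g'" if "\<forall>x\<in>E. g x = g' x" for g g'
  proof -
    have im: "g ` E = g' ` E" using that by (auto simp: image_def)
    have "\<And>y. {x\<in>E. g x = y} = {x\<in>E. g' x = y}" using that by auto
    then show ?thesis unfolding simple_int_def im by simp
  qed
  have LE: "{x\<in>E. g x = y} \<in> A" if g: "simple_fn X A g" for g y
  proof -
    have "{x\<in>E. g x = y} = {x\<in>X. g x = y} \<inter> E" using EX by blast
    then show ?thesis using field_basic(5)[OF field level_in_field[OF field g] EA] by simp
  qed
  fix r
  show "(\<forall>\<epsilon>>0. \<exists>\<delta>>0. \<forall>g. simple_fn X A g \<and> (\<forall>x\<in>X. \<bar>f x - g x\<bar> \<le> \<delta>)
      \<longrightarrow> \<bar>simple_int X \<mu> g - r\<bar> \<le> \<epsilon>) \<longleftrightarrow>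
    (\<forall>\<epsilon>>0. \<exists>\<delta>>0. \<forall>g. simple_fn S (trace A S) g \<and> (\<forall>x\<in>S. \<bar>f x - g x\<bar> \<le> \<delta>)
      \<longrightarrow> \<bar>simple_int S \<nu> g - r\<bar> \<le> \<epsilon>)" (is "?PX \<longleftrightarrow> ?PS")
  proof
    assume PS: ?PS
    show ?PX
    proof (intro allI impI)
      fix \<epsilon> :: real assume e: "\<epsilon> > 0"
      then obtain \<delta> where d: "\<delta> > 0" and dS: "\<forall>g. simple_fn S (trace A S) g \<and> (\<forall>x\<in>S. \<bar>f x - g x\<bar> \<le> \<delta>)
      \<longrightarrow> \<bar>simple_int S \<nu> g - r\<bar> \<le> \<epsilon>" using PS by blast
      show "\<exists>\<delta>>0. \<forall>g. simple_fn X A g \<and> (\<forall>x\<in>X. \<bar>f x - g x\<bar> \<le> \<delta>)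
      \<longrightarrow> \<bar>simple_int X \<mu> g - r\<bar> \<le> \<epsilon>"
      proof (intro exI[where x=\<delta>] conjI allI impI)
        show "\<delta> > 0" by (fact d)
        fix g assume g: "simple_fn X A g \<and> (\<forall>x\<in>X. \<bar>f x - g x\<bar> \<le> \<delta>)"
        have gS: "simple_fn S (trace A S) g" using simple_fn_restr[OF _ SX] g by blast
        have "\<forall>x\<in>S. \<bar>f x - g x\<bar> \<le> \<delta>" using g SX by blast
        then have "\<bar>simple_int S \<nu> g - r\<bar> \<le> \<epsilon>" using dS gS by blast
        moreover have "simple_int X \<mu> g = simple_int S \<nu> g"
          using Xside[of g] Emid[of g] Sside[OF gS] LE[of g] g by simp
        ultimately show "\<bar>simple_int X \<mu> g - r\<bar> \<le> \<epsilon>" by simp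
      qed
    qed
  next
    assume PX: ?PX
    show ?PS
    proof (intro allI impI)
      fix \<epsilon> :: real assume e: "\<epsilon> > 0"
      then obtain \<delta> where d: "\<delta> > 0" and dX: "\<forall>g. simple_fn X A g \<and> (\<forall>x\<in>X. \<bar>f x - g x\<bar> \<le> \<delta>)
      \<longrightarrow> \<bar>simple_int X \<mu> g - r\<bar> \<le> \<epsilon>" using PX by blast
      show "\<exists>\<delta>>0. \<forall>g. simple_fn S (trace A S) g \<and> (\<forall>x\<in>S. \<bar>f x - g x\<bar> \<le> \<delta>)
      \<longrightarrow> \<bar>simple_int S \<nu> g - r\<bar> \<le> \<epsilon>"
      proof (intro exI[where x=\<delta>] conjI allI impI)
        show "\<delta> > 0" by (fact d)
        fix g' assume g': "simple_fn S (trace A S) g' \<and> (\<forall>x\<in>S. \<bar>f x - g' x\<bar> \<le> \<delta>)"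
        obtain g'' where g'': "simple_fn X A g''" "\<forall>x\<in>S. g'' x = g' x"
          using simple_fn_ext g' by blast
        obtain h where h: "simple_fn X A h" "\<forall>x\<in>X. \<bar>f x - h x\<bar> \<le> \<delta>"
          using f d unfolding Bsp_def by blast
        define g where "g x = indicator E x * g'' x + indicator (X - E) x * h x" for x
        have gs: "simple_fn X A g" unfolding g_def
          by (intro simple_fn_add simple_fn_mult_ind[OF field] g''(1) h(1) EA
              field_basic(7)[OF field EA])
        have gE: "\<forall>x\<in>E. g x = g' x" using g'' ES unfolding g_def by auto
        have "\<forall>x\<in>X. \<bar>f x - g x\<bar> \<le> \<delta>"
        proof
          fix x assume x: "x \<in> X"
          show "\<bar>f x - g x\<bar> \<le> \<delta>"
          proof (cases "x \<in> E")
            case True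
            then show ?thesis using gE g' ES by auto
          next
            case False
            then have "g x = h x" using x unfolding g_def by simp
            then show ?thesis using h x by simp
          qed
        qed
        then have "\<bar>simple_int X \<mu> g - r\<bar> \<le> \<epsilon>" using dX gs by blast
        moreover have "simple_int X \<mu> g = simple_int S \<nu> g'"
          using Xside[OF gs] Emid[OF LE[OF gs]] Econg[OF gE] Sside g' by simp
        ultimately show "\<bar>simple_int S \<nu> g' - r\<bar> \<le> \<epsilon>" by simp
      qed
    qed
  qed
qed

lemma closure_conc:
  fixes P :: "'a set \<Rightarrow> real"
  assumes field: "field_on S F" and EF: "E \<in> F" and P: "P \<in> wstar_closure S F C"
    and C: "\<forall>Q\<in>C. Q \<in> ba S F \<and> (\<forall>H\<in>F. Q H \<ge> 0) \<and> Q S = 1 \<and> Q E = 1"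
  shows "\<forall>H\<in>F. P H = P (H \<inter> E)"
proof -
  have Pba: "P \<in> ba S F" using P unfolding wstar_closure_def by blast
  have add: "\<forall>E\<in>F. \<forall>G\<in>F. E \<inter> G = {} \<longrightarrow> P (E \<union> G) = P E + P G"
    using Pba unfolding ba_def by blast
  have approx: "\<exists>Q\<in>C. \<bar>P H - Q H\<bar> < e" if H: "H \<in> F" and e: "e > 0" for H e
  proof -
    have "finite {indicator H} \<and> {indicator H} \<subseteq> Bsp S F" using indicator_Bsp[OF H] by simp
    then obtain Q where Q: "Q \<in> C" "\<bar>fa_integral S F P (indicator H) - fa_integral S F Q (indicator H)\<bar> < e"
      using P e unfolding wstar_closure_def by blast
    have "fa_integral S F P (indicator H) = P H" using integral_indicator[OF field Pba H] .
    moreover have "fa_integral S F Q (indicator H) = Q H" using integral_indicator[OF field _ H] C Q(1) by blast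
    ultimately show ?thesis using Q by auto
  qed
  have nonneg: "P H \<ge> 0" if H: "H \<in> F" for H
  proof (rule ccontr)
    assume "\<not> P H \<ge> 0"
    then obtain Q where "Q \<in> C" "\<bar>P H - Q H\<bar> < - P H" using approx[OF H] by force
    moreover have "Q H \<ge> 0" using C H \<open>Q \<in> C\<close> by blast
    ultimately show False by linarith
  qed
  have one: "P H = 1" if H: "H \<in> F" and QH: "\<forall>Q\<in>C. Q H = 1" for H
  proof (rule ccontr)
    assume "P H \<noteq> 1"
    then have "\<bar>P H - 1\<bar> > 0" by simp
    then obtain Q where "Q \<in> C" "\<bar>P H - Q H\<bar> < \<bar>P H - 1\<bar>" using approx[OF H, of "\<bar>P H - 1\<bar>"] by blast
    moreover have "Q H = 1" using QH \<open>Q \<in> C\<close> by blast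
    ultimately show False by simp
  qed
  have SF: "S \<in> F" using field_basic(6)[OF field] .
  have PS: "P S = 1" using one[OF SF] C by blast
  have PE: "P E = 1" using one[OF EF] C by blast
  have SE: "S - E \<in> F" using field_basic(4)[OF field SF EF] .
  have "P S = P E + P (S - E)"
  proof -
    have "E \<union> (S - E) = S" using field_basic(2)[OF field EF] by blast
    then show ?thesis using add EF SE by (metis Diff_disjoint)
  qed
  then have PSE: "P (S - E) = 0" using PS PE by simp
  show ?thesis
  proof
    fix H assume H: "H \<in> F"
    have HE: "H - E \<in> F" "H \<inter> E \<in> F" using field_basic(4,5)[OF field H EF] by auto
    have R: "(S - E) - (H - E) \<in> F" using field_basic(4)[OF field SE HE(1)] .
    have "P (S - E) = P (H - E) + P ((S - E) - (H - E))"
    proof -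
      have "(H - E) \<union> ((S - E) - (H - E)) = S - E" using field_basic(2)[OF field H] by blast
      moreover have "(H - E) \<inter> ((S - E) - (H - E)) = {}" by blast
      ultimately show ?thesis using add HE(1) R by metis
    qed
    then have "P (H - E) = 0" using PSE nonneg[OF HE(1)] nonneg[OF R] by linarith
    moreover have "P H = P (H \<inter> E) + P (H - E)"
    proof -
      have "(H \<inter> E) \<union> (H - E) = H" by blast
      moreover have "(H \<inter> E) \<inter> (H - E) = {}" by blast
      ultimately show ?thesis using add HE by metis
    qed
    ultimately show "P H = P (H \<inter> E)" by simp
  qed
qed

lemma ts_facts:
  assumes "type_space X A N M t"
  shows "field_on X A" "N \<noteq> {}"
    "\<And>i. i \<in> N \<Longrightarrow> field_on X (M i)"
    "\<And>i x G. i \<in> N \<Longrightarrow> x \<in> X \<Longrightarrow> G \<in> A \<Longrightarrow> 0 \<le> t i x G \<and> t i x G \<le> 1"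
    "\<And>i x. i \<in> N \<Longrightarrow> x \<in> X \<Longrightarrow> t i x \<in> pba X A"
    "\<And>i x G. i \<in> N \<Longrightarrow> G \<in> M i \<Longrightarrow> x \<in> G \<Longrightarrow> t i x G = 1"
  using assms unfolding type_space_def by blast+

lemma pba_add:
  assumes "P \<in> pba X A" "G1 \<in> A" "G2 \<in> A" "G1 \<inter> G2 = {}"
  shows "P (G1 \<union> G2) = P G1 + P G2"
  using assms unfolding pba_def by blast

lemma point_conc:
  assumes ts: "type_space X A N M t" and i: "i \<in> N" and w: "w \<in> X"
    and EA: "E \<in> A" and tE: "t i w E = 1" and G: "G \<in> A"
  shows "t i w G = t i w (G \<inter> E)"
proof -
  have field: "field_on X A" using ts_facts(1)[OF ts] .
  have pba: "t i w \<in> pba X A" using ts_facts(5)[OF ts i w] .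
  have GE: "G - E \<in> A" "G \<inter> E \<in> A" using field_basic(4,5)[OF field G EA] by auto
  have U: "(G - E) \<union> E \<in> A" using field_basic(3)[OF field GE(1) EA] .
  have "t i w ((G - E) \<union> E) = t i w (G - E) + t i w E"
    using pba_add[OF pba GE(1) EA] by blast
  moreover have "t i w ((G - E) \<union> E) \<le> 1" using ts_facts(4)[OF ts i w U] by simp
  moreover have "t i w (G - E) \<ge> 0" using ts_facts(4)[OF ts i w GE(1)] by simp
  ultimately have z: "t i w (G - E) = 0" using tE by simp
  have "(G \<inter> E) \<union> (G - E) = G" by blast
  then have "t i w G = t i w (G \<inter> E) + t i w (G - E)"
    using pba_add[OF pba GE(2) GE(1)] by (metis Diff_disjoint Int_Diff inf_commute inf_left_commute)
  then show ?thesis using z by simp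
qed

lemma induced_eq:
  assumes ts: "type_space X A N M t" and i: "i \<in> N" and SX: "S \<subseteq> X" and w: "w \<in> S"
    and EA: "E \<in> A" and ES: "E \<subseteq> S" and tE: "t i w E = 1" and G: "G \<in> A"
  shows "induced_t A S t i w (G \<inter> S) = t i w G"
proof -
  define G' where "G' = (SOME G'. G' \<in> A \<and> G \<inter> S = G' \<inter> S)"
  have "\<exists>G'. G' \<in> A \<and> G \<inter> S = G' \<inter> S" using G by blast
  then have G'': "G' \<in> A \<and> G \<inter> S = G' \<inter> S" unfolding G'_def by (rule someI_ex)
  then have G': "G' \<in> A" "G \<inter> S = G' \<inter> S" by auto
  have wX: "w \<in> X" using w SX by blast
  have "G' \<inter> E = G \<inter> E" using G'(2) ES by blast
  then have "t i w G' = t i w G"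
    using point_conc[OF ts i wX EA tE G'(1)] point_conc[OF ts i wX EA tE G] by simp
  then show ?thesis unfolding induced_t_def G'_def by simp
qed

lemma trace_ba:
  fixes \<mu> \<nu> :: "'a set \<Rightarrow> real"
  assumes field: "field_on X A" and EA: "E \<in> A" and ES: "E \<subseteq> S" and SX: "S \<subseteq> X"
    and add: "\<forall>G1\<in>A. \<forall>G2\<in>A. G1 \<inter> G2 = {} \<longrightarrow> \<mu> (G1 \<union> G2) = \<mu> G1 + \<mu> G2"
    and K: "\<forall>G\<in>A. \<bar>\<mu> G\<bar> \<le> K"
    and conc: "\<forall>G\<in>A. \<mu> G = \<mu> (G \<inter> E)"
    and rel: "\<forall>G\<in>A. \<nu> (G \<inter> S) = \<mu> G"
  shows "\<nu> \<in> ba S (trace A S)" "\<forall>H\<in>trace A S. \<nu> H = \<nu> (H \<inter> E)"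
proof -
  show "\<nu> \<in> ba S (trace A S)"
    unfolding ba_def
  proof (intro CollectI conjI ballI impI)
    fix H1 H2 assume H1: "H1 \<in> trace A S" and H2: "H2 \<in> trace A S" and d: "H1 \<inter> H2 = {}"
    obtain G1 where G1: "G1 \<in> A" "H1 = G1 \<inter> S" using H1 unfolding trace_def by blast
    obtain G2 where G2: "G2 \<in> A" "H2 = G2 \<inter> S" using H2 unfolding trace_def by blast
    have U: "G1 \<union> G2 \<in> A" using field_basic(3)[OF field G1(1) G2(1)] .
    have E1: "G1 \<inter> E \<in> A" and E2: "G2 \<inter> E \<in> A" using field_basic(5)[OF field _ EA] G1 G2 by auto
    have dE: "(G1 \<inter> E) \<inter> (G2 \<inter> E) = {}" using d G1 G2 ES by blast
    have "\<nu> (H1 \<union> H2) = \<mu> (G1 \<union> G2)" using rel U G1 G2 by (metis Int_Un_distrib2)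
    also have "\<dots> = \<mu> ((G1 \<inter> E) \<union> (G2 \<inter> E))" using conc U by (metis Int_Un_distrib2)
    also have "\<dots> = \<mu> (G1 \<inter> E) + \<mu> (G2 \<inter> E)" using add E1 E2 dE by blast
    also have "\<dots> = \<mu> G1 + \<mu> G2" using conc G1 G2 by metis
    also have "\<dots> = \<nu> H1 + \<nu> H2" using rel G1 G2 by metis
    finally show "\<nu> (H1 \<union> H2) = \<nu> H1 + \<nu> H2" .
  next
    show "\<exists>K. \<forall>H\<in>trace A S. \<bar>\<nu> H\<bar> \<le> K"
    proof (intro exI[where x=K] ballI)
      fix H assume "H \<in> trace A S"
      then obtain G where "G \<in> A" "H = G \<inter> S" unfolding trace_def by blast
      then show "\<bar>\<nu> H\<bar> \<le> K" using rel K by metis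
    qed
  qed
  show "\<forall>H\<in>trace A S. \<nu> H = \<nu> (H \<inter> E)"
  proof
    fix H assume "H \<in> trace A S"
    then obtain G where G: "G \<in> A" "H = G \<inter> S" unfolding trace_def by blast
    have GE: "G \<inter> E \<in> A" using field_basic(5)[OF field G(1) EA] .
    have "(G \<inter> E) \<inter> S = H \<inter> E" using G ES by blast
    then have "\<nu> (H \<inter> E) = \<mu> (G \<inter> E)" using rel GE by metis
    also have "\<dots> = \<mu> G" using conc G by metis
    also have "\<dots> = \<nu> H" using rel G by metis
    finally show "\<nu> H = \<nu> (H \<inter> E)" by simp
  qed
qed

lemma conv_pair:
  assumes ts: "type_space X A N M t" and i: "i \<in> N" and SX: "S \<subseteq> X"
    and EA: "E \<in> A" and ES: "E \<subseteq> S" and tE: "\<forall>x\<in>S. t i x E = 1"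
    and Q: "Q \<in> types_conv S (induced_t A S t i)"
  shows "\<exists>QX\<in>types_conv X (t i). (\<forall>G\<in>A. Q (G \<inter> S) = QX G) \<and> Q \<in> ba S (trace A S) \<and>
     (\<forall>H\<in>trace A S. Q H = Q (H \<inter> E)) \<and> (\<forall>H\<in>trace A S. Q H \<ge> 0) \<and> Q S = 1 \<and> Q E = 1 \<and> Q {} = 0"
proof -
  have field: "field_on X A" using ts_facts(1)[OF ts] .
  obtain n a w where n: "(n::nat) \<ge> 1" and aw: "\<forall>k<n. a k \<ge> 0 \<and> w k \<in> S"
    and suma: "(\<Sum>k<n. a k) = 1" and Qdef: "Q = (\<lambda>H. \<Sum>k<n. a k * induced_t A S t i (w k) H)"
    using Q unfolding types_conv_def by blast
  define QX where "QX G = (\<Sum>k<n. a k * t i (w k) G)" for G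
  have wX: "\<forall>k<n. w k \<in> X" using aw SX by blast
  have QXc: "QX \<in> types_conv X (t i)" unfolding types_conv_def QX_def
    using n aw wX suma by blast
  have rel: "\<forall>G\<in>A. Q (G \<inter> S) = QX G"
  proof
    fix G assume G: "G \<in> A"
    show "Q (G \<inter> S) = QX G" unfolding Qdef QX_def
      using induced_eq[OF ts i SX _ EA ES _ G] aw tE by (intro sum.cong) auto
  qed
  have add: "\<forall>G1\<in>A. \<forall>G2\<in>A. G1 \<inter> G2 = {} \<longrightarrow> QX (G1 \<union> G2) = QX G1 + QX G2"
  proof (intro ballI impI)
    fix G1 G2 assume G: "G1 \<in> A" "G2 \<in> A" "G1 \<inter> G2 = {}"
    have "QX (G1 \<union> G2) = (\<Sum>k<n. a k * t i (w k) G1 + a k * t i (w k) G2)"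
      unfolding QX_def using pba_add[OF ts_facts(5)[OF ts i] G] wX
      by (intro sum.cong) (auto simp: distrib_left)
    then show "QX (G1 \<union> G2) = QX G1 + QX G2" unfolding QX_def by (simp add: sum.distrib)
  qed
  have nn: "QX G \<ge> 0" if G: "G \<in> A" for G
    unfolding QX_def using aw wX ts_facts(4)[OF ts i _ G] by (intro sum_nonneg) auto
  have le1: "QX G \<le> 1" if G: "G \<in> A" for G
  proof -
    have "QX G \<le> (\<Sum>k<n. a k * 1)"
      unfolding QX_def using aw wX ts_facts(4)[OF ts i _ G]
      by (intro sum_mono mult_left_mono) auto
    then show ?thesis using suma by simp
  qed
  have K: "\<forall>G\<in>A. \<bar>QX G\<bar> \<le> 1" using nn le1 by auto
  have conc: "\<forall>G\<in>A. QX G = QX (G \<inter> E)"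
  proof
    fix G assume G: "G \<in> A"
    show "QX G = QX (G \<inter> E)" unfolding QX_def
      using point_conc[OF ts i _ EA _ G] aw wX tE by (intro sum.cong) auto
  qed
  have tb: "Q \<in> ba S (trace A S)" "\<forall>H\<in>trace A S. Q H = Q (H \<inter> E)"
    using trace_ba[OF field EA ES SX add K conc rel] by auto
  have nonneg: "\<forall>H\<in>trace A S. Q H \<ge> 0"
  proof
    fix H assume "H \<in> trace A S"
    then obtain G where G: "G \<in> A" "H = G \<inter> S" unfolding trace_def by blast
    then have "Q H = QX G" using rel by blast
    then show "Q H \<ge> 0" using nn[OF G(1)] by simp
  qed
  have QXX: "QX X = 1"
  proof -
    have "QX X = (\<Sum>k<n. a k * 1)" unfolding QX_def
      using ts_facts(5)[OF ts i] wX by (intro sum.cong) (auto simp: pba_def)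
    then show ?thesis using suma by simp
  qed
  have QXE: "QX E = 1"
  proof -
    have "QX E = (\<Sum>k<n. a k * 1)" unfolding QX_def using aw tE by (intro sum.cong) auto
    then show ?thesis using suma by simp
  qed
  have QS: "Q S = 1"
  proof -
    have "X \<inter> S = S" using SX by blast
    then have "Q S = QX X" using rel field_basic(6)[OF field] by force
    then show ?thesis using QXX by simp
  qed
  have QE: "Q E = 1"
  proof -
    have "E \<inter> S = E" using ES by blast
    then have "Q E = QX E" using rel EA by force
    then show ?thesis using QXE by simp
  qed
  have QX0: "QX {} = 0" using additive_empty[OF field add] .
  have Q0: "Q {} = 0"
  proof -
    have "Q ({} \<inter> S) = QX {}" using rel field_basic(1)[OF field] by blast
    then show ?thesis using QX0 by simp
  qed
  show ?thesis
    by (intro bexI[OF _ QXc] conjI rel tb nonneg QS QE Q0)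
qed

lemma induced_self:
  assumes field: "field_on X A" and G: "G \<in> A"
  shows "induced_t A X t i w G = t i w G"
proof -
  define G' where "G' = (SOME G'. G' \<in> A \<and> G = G' \<inter> X)"
  have "G = G \<inter> X" using field_basic(2)[OF field G] by blast
  then have "\<exists>G'. G' \<in> A \<and> G = G' \<inter> X" using G by blast
  then have G'': "G' \<in> A \<and> G = G' \<inter> X" unfolding G'_def by (rule someI_ex)
  then have "G' \<subseteq> X" using field_basic(2)[OF field] by blast
  then have "G' = G" using G'' by blast
  then show ?thesis unfolding induced_t_def G'_def by simp
qed

lemma backward:
  assumes ts: "type_space X A N M t" and cc: "cc_component X A N t S"
    and consS: "consistent S (trace A S) N (\<lambda>i. trace (M i) S) (induced_t A S t)"
  shows "consistent X A N M t"
proof -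
  have field: "field_on X A" using ts_facts(1)[OF ts] .
  obtain E where SX: "S \<subseteq> X" and EA: "E \<in> A" and ES: "E \<subseteq> S"
    and tE: "\<forall>x\<in>S. \<forall>i\<in>N. t i x E = 1"
    using cc unfolding cc_component_def by blast
  have trS: "field_on S (trace A S)" using field_on_trace[OF field SX] .
  have ET: "E \<in> trace A S"
  proof -
    have "E = E \<inter> S" using ES by blast
    then show ?thesis unfolding trace_def using EA by blast
  qed
  show ?thesis unfolding consistent_def
  proof (intro allI impI)
    fix I assume I: "finite I \<and> I \<subseteq> N"
    then obtain PS where PS: "PS \<in> (\<Inter>i\<in>I. Pi_set S (trace A S) (induced_t A S t i))"
      using consS unfolding consistent_def by blast
    define P where "P G = PS (G \<inter> S)" for G
    have "P \<in> Pi_set X A (t i)" if iI: "i \<in> I" for i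
    proof -
      have i: "i \<in> N" using I iI by blast
      have PSi: "PS \<in> wstar_closure S (trace A S) (types_conv S (induced_t A S t i))"
        using PS iI unfolding Pi_set_def by blast
      have tEi: "\<forall>x\<in>S. t i x E = 1" using tE i by blast
      have Cprops: "\<forall>Q\<in>types_conv S (induced_t A S t i). Q \<in> ba S (trace A S) \<and>
          (\<forall>H\<in>trace A S. Q H \<ge> 0) \<and> Q S = 1 \<and> Q E = 1"
        using conv_pair[OF ts i SX EA ES tEi] by blast
      have PSconc: "\<forall>H\<in>trace A S. PS H = PS (H \<inter> E)"
        using closure_conc[OF trS ET PSi Cprops] .
      have PSba: "PS \<in> ba S (trace A S)" using PSi unfolding wstar_closure_def by blast
      have PSadd: "\<forall>E\<in>trace A S. \<forall>G\<in>trace A S. E \<inter> G = {} \<longrightarrow> PS (E \<union> G) = PS E + PS G"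
        using PSba unfolding ba_def by blast
      have PS0: "PS {} = 0" using additive_empty[OF trS PSadd] .
      obtain K where K: "\<forall>H\<in>trace A S. \<bar>PS H\<bar> \<le> K" using PSba unfolding ba_def by blast
      have inT: "G \<inter> S \<in> trace A S" if "G \<in> A" for G unfolding trace_def using that by blast
      have Pba: "P \<in> ba X A"
        unfolding ba_def
      proof (intro CollectI conjI ballI impI)
        fix G1 G2 assume G: "G1 \<in> A" "G2 \<in> A" "G1 \<inter> G2 = {}"
        have "(G1 \<union> G2) \<inter> S = (G1 \<inter> S) \<union> (G2 \<inter> S)" by blast
        moreover have "(G1 \<inter> S) \<inter> (G2 \<inter> S) = {}" using G by blast
        moreover have "G1 \<inter> S \<in> trace A S" "G2 \<inter> S \<in> trace A S" using inT G by auto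
        ultimately show "P (G1 \<union> G2) = P G1 + P G2"
          unfolding P_def using PSadd by simp
      next
        show "\<exists>K. \<forall>G\<in>A. \<bar>P G\<bar> \<le> K" unfolding P_def using K inT by blast
      qed
      have relP: "\<forall>G\<in>A. PS (G \<inter> S) = P G" unfolding P_def by simp
      show ?thesis unfolding Pi_set_def wstar_closure_def
      proof (intro CollectI conjI Pba allI impI)
        fix Fs :: "('a \<Rightarrow> real) set" and \<epsilon> :: real
        assume Fs: "finite Fs \<and> Fs \<subseteq> Bsp X A" and e: "\<epsilon> > 0"
        have FsS: "finite Fs \<and> Fs \<subseteq> Bsp S (trace A S)" using Fs Bsp_restr[OF _ SX] by blast
        obtain Q where Q: "Q \<in> types_conv S (induced_t A S t i)"
          and Qc: "\<forall>f\<in>Fs. \<bar>fa_integral S (trace A S) PS f - fa_integral S (trace A S) Q f\<bar> < \<epsilon>"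
          using PSi FsS e unfolding wstar_closure_def by blast
        obtain QX where QX: "QX \<in> types_conv X (t i)" and relQ: "\<forall>G\<in>A. Q (G \<inter> S) = QX G"
          and Qconc: "\<forall>H\<in>trace A S. Q H = Q (H \<inter> E)" and Q0: "Q {} = 0"
          using conv_pair[OF ts i SX EA ES tEi Q] by blast
        show "\<exists>Q\<in>types_conv X (t i). \<forall>f\<in>Fs. \<bar>fa_integral X A P f - fa_integral X A Q f\<bar> < \<epsilon>"
        proof (intro bexI[OF _ QX] ballI)
          fix f assume f: "f \<in> Fs"
          have fB: "f \<in> Bsp X A" using Fs f by blast
          have "fa_integral X A P f = fa_integral S (trace A S) PS f"
            using transfer[OF field SX EA ES relP PSconc PS0 fB] .
          moreover have "fa_integral X A QX f = fa_integral S (trace A S) Q f"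
            using transfer[OF field SX EA ES relQ Qconc Q0 fB] .
          ultimately show "\<bar>fa_integral X A P f - fa_integral X A QX f\<bar> < \<epsilon>" using Qc f by simp
        qed
      qed
    qed
    then show "(\<Inter>i\<in>I. Pi_set X A (t i)) \<noteq> {}" by blast
  qed
qed

lemma forward:
  assumes ts: "type_space X A N M t" and cons: "consistent X A N M t"
  shows "cc_component X A N t X \<and>
       consistent X (trace A X) N (\<lambda>i. trace (M i) X) (induced_t A X t)"
proof
  have field: "field_on X A" using ts_facts(1)[OF ts] .
  have trA: "trace A X = A" using trace_self[OF field] .
  obtain i0 where i0: "i0 \<in> N" using ts_facts(2)[OF ts] by blast
  have Xne: "X \<noteq> {}"
  proof -
    have "finite {i0} \<and> {i0} \<subseteq> N" using i0 by simp
    then have "(\<Inter>i\<in>{i0}. Pi_set X A (t i)) \<noteq> {}" using cons unfolding consistent_def by blast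
    then obtain P where "P \<in> Pi_set X A (t i0)" by auto
    then have cl: "\<forall>Fs. finite Fs \<and> Fs \<subseteq> Bsp X A \<longrightarrow> (\<forall>\<epsilon>>0. \<exists>Q\<in>types_conv X (t i0).
      \<forall>f\<in>Fs. \<bar>fa_integral X A P f - fa_integral X A Q f\<bar> < \<epsilon>)"
      unfolding Pi_set_def wstar_closure_def by blast
    have "finite {} \<and> {} \<subseteq> Bsp X A" by simp
    then have cl2: "\<forall>\<epsilon>>0. \<exists>Q\<in>types_conv X (t i0). \<forall>f\<in>{}. \<bar>fa_integral X A P f - fa_integral X A Q f\<bar> < \<epsilon>"
      using cl by blast
    have e1: "\<exists>\<epsilon>::real. 0 < \<epsilon>" by (rule exI[of _ 1]) simp
    have "\<exists>Q. Q \<in> types_conv X (t i0)" using cl2 e1 by simp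
    then obtain Q where "Q \<in> types_conv X (t i0)" ..
    then obtain n and a :: "nat \<Rightarrow> real" and w where "(n::nat) \<ge> 1" "\<forall>k<n. a k \<ge> 0 \<and> w k \<in> X"
      unfolding types_conv_def by blast
    then have "w 0 \<in> X" by auto
    then show ?thesis by blast
  qed
  show "cc_component X A N t X"
    unfolding cc_component_def
  proof (rule conjI[OF Xne], rule conjI[OF subset_refl], rule bexI[where x=X])
    show "X \<in> A" using field_basic(6)[OF field] .
    have "t i x X = 1" if "x \<in> X" "i \<in> N" for x i
      using ts_facts(6)[OF ts that(2) field_basic(6)[OF ts_facts(3)[OF ts that(2)]] that(1)] .
    then show "X \<subseteq> X \<and> (\<forall>x\<in>X. \<forall>i\<in>N. t i x X = 1)" by blast
  qed
  show "consistent X (trace A X) N (\<lambda>i. trace (M i) X) (induced_t A X t)"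
    unfolding consistent_def trA
  proof (intro allI impI)
    fix I assume I: "finite I \<and> I \<subseteq> N"
    then obtain P where P: "P \<in> (\<Inter>i\<in>I. Pi_set X A (t i))"
      using cons unfolding consistent_def by blast
    have "P \<in> Pi_set X A (induced_t A X t i)" if iI: "i \<in> I" for i
    proof -
      have Pcl: "P \<in> wstar_closure X A (types_conv X (t i))" using P iI unfolding Pi_set_def by blast
      show ?thesis unfolding Pi_set_def wstar_closure_def
      proof (intro CollectI conjI allI impI)
        show "P \<in> ba X A" using Pcl unfolding wstar_closure_def by blast
        fix Fs :: "('a \<Rightarrow> real) set" and \<epsilon> :: real
        assume Fs: "finite Fs \<and> Fs \<subseteq> Bsp X A" and e: "\<epsilon> > 0"
        obtain Q where Q: "Q \<in> types_conv X (t i)"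
          and Qc: "\<forall>f\<in>Fs. \<bar>fa_integral X A P f - fa_integral X A Q f\<bar> < \<epsilon>"
          using Pcl Fs e unfolding wstar_closure_def by blast
        obtain n a w where n: "(n::nat) \<ge> 1" and aw: "\<forall>k<n. a k \<ge> 0 \<and> w k \<in> X"
          and suma: "(\<Sum>k<n. a k) = 1" and Qdef: "Q = (\<lambda>H. \<Sum>k<n. a k * t i (w k) H)"
          using Q unfolding types_conv_def by blast
        define Q' where "Q' = (\<lambda>H. \<Sum>k<n. a k * induced_t A X t i (w k) H)"
        have Q'c: "Q' \<in> types_conv X (induced_t A X t i)"
          unfolding types_conv_def Q'_def using n aw suma by blast
        have eq: "\<forall>G\<in>A. Q G = Q' G"
          unfolding Qdef Q'_def by (simp add: induced_self[OF field])
        show "\<exists>Q\<in>types_conv X (induced_t A X t i).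
             \<forall>f\<in>Fs. \<bar>fa_integral X A P f - fa_integral X A Q f\<bar> < \<epsilon>"
        proof (intro bexI[OF _ Q'c] ballI)
          fix f assume "f \<in> Fs"
          then show "\<bar>fa_integral X A P f - fa_integral X A Q' f\<bar> < \<epsilon>"
            using Qc fa_integral_cong[OF field eq, of f] by force
        qed
      qed
    qed
    then show "(\<Inter>i\<in>I. Pi_set X A (induced_t A X t i)) \<noteq> {}" by blast
  qed
qed

theorem proposition3:
  fixes X :: "'w set" and A :: "'w set set" and N :: "'i set"
    and M :: "'i \<Rightarrow> 'w set set" and t :: "'i \<Rightarrow> 'w \<Rightarrow> 'w set \<Rightarrow> real"
  assumes "type_space X A N M t"
  shows "consistent X A N M t \<longleftrightarrow>
    (\<exists>S. cc_component X A N t S \<and>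
       consistent S (trace A S) N (\<lambda>i. trace (M i) S) (induced_t A S t))"
  using forward[OF assms] backward[OF assms] by blast

end
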